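(* Let $e[r]$ be an affine function of $r$ with $e[1]>0$ and $e[-1]>0$. The set $U$ is convex and its closure splits as $\overline U=K_-'\cup\overline U_0\cup K_+'$. In particular $K\subset\overline U$.
   Context: Let $n\ge2$, $\mathcal S_0^{n\times n}$ the trace-free symmetric matrices, $Z:=\mathbb{R}\times\mathbb{R}^n\times\mathbb{R}^n\times\mathcal S_0^{n\times n}\times\mathbb{R}$ with elements $z=(\rho,v,m,\sigma,p)$. $K:=\{z:\rho\in\{\pm1\},m=\rho v,v\otimes v-\sigma=e[\rho]\mathrm{Id}\}$. For $\rho\in(-1,1)$: $M(z)=\frac{v\otimes v-\rho(m\otimes v+v\otimes m)+m\otimes m}{1-\rho^2}-\sigma$, $Q(z)=\lambda_{\max}(M(z))$, $T_\pm(z)=\frac{|m\pm v|^2}{n(\rho\pm1)^2}$. $U:=\{z:\rho\in(-1,1),T_\pm(z)<e[\pm1],Q(z)<e[\rho]\}$, $\overline U_0:=\{z:\rho\in(-1,1),T_\pm(z)\le e[\pm1],Q(z)\le e[\rho]\}$, $K_\pm':=\{z:\rho=\pm1,m=\pm v,\lambda_{\max}(v\otimes v-\sigma)\le e[\pm1]\}$. *)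

theory Defs
  imports "HOL-Analysis.Analysis"
begin

type_synonym ('n) zpt = "real \<times> (real^'n) \<times> (real^'n) \<times> (real^'n^'n) \<times> real"

definition outer :: "real^('n::finite) \<Rightarrow> real^'n \<Rightarrow> real^'n^'n" where
  "outer u w = (\<chi> i j. u$i * w$j)"

definition sym_tracefree :: "real^('n::finite)^'n \<Rightarrow> bool" where
  "sym_tracefree A \<longleftrightarrow> transpose A = A \<and> (\<Sum>i\<in>UNIV. A$i$i) = 0"

definition Zset :: "('n::finite) zpt set" where
  "Zset = {(\<rho>, v, m, \<sigma>, p). sym_tracefree \<sigma>}"

definition lambda_max :: "real^('n::finite)^'n \<Rightarrow> real" where
  "lambda_max A = Max {c. \<exists>x. x \<noteq> 0 \<and> A *v x = c *\<^sub>R x}"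

definition Mz :: "('n::finite) zpt \<Rightarrow> real^'n^'n" where
  "Mz z = (case z of (\<rho>, v, m, \<sigma>, p) \<Rightarrow>
     (1 / (1 - \<rho>^2)) *\<^sub>R (outer v v - \<rho> *\<^sub>R (outer m v + outer v m) + outer m m) - \<sigma>)"

definition Qz :: "('n::finite) zpt \<Rightarrow> real" where
  "Qz z = lambda_max (Mz z)"

definition Tplus :: "('n::finite) zpt \<Rightarrow> real" where
  "Tplus z = (case z of (\<rho>, v, m, \<sigma>, p) \<Rightarrow>
     (norm (m + v))^2 / (real CARD('n) * (\<rho> + 1)^2))"

definition Tminus :: "('n::finite) zpt \<Rightarrow> real" where
  "Tminus z = (case z of (\<rho>, v, m, \<sigma>, p) \<Rightarrow>
     (norm (m - v))^2 / (real CARD('n) * (\<rho> - 1)^2))"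

definition Kset :: "(real \<Rightarrow> real) \<Rightarrow> ('n::finite) zpt set" where
  "Kset e = {z \<in> Zset. case z of (\<rho>, v, m, \<sigma>, p) \<Rightarrow>
     (\<rho> = 1 \<or> \<rho> = -1) \<and> m = \<rho> *\<^sub>R v \<and> outer v v - \<sigma> = e \<rho> *\<^sub>R mat 1}"

definition Uset :: "(real \<Rightarrow> real) \<Rightarrow> ('n::finite) zpt set" where
  "Uset e = {z \<in> Zset. case z of (\<rho>, v, m, \<sigma>, p) \<Rightarrow>
     -1 < \<rho> \<and> \<rho> < 1 \<and> Tplus z < e 1 \<and> Tminus z < e (-1) \<and> Qz z < e \<rho>}"

definition U0bar :: "(real \<Rightarrow> real) \<Rightarrow> ('n::finite) zpt set" where
  "U0bar e = {z \<in> Zset. case z of (\<rho>, v, m, \<sigma>, p) \<Rightarrow>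
     -1 < \<rho> \<and> \<rho> < 1 \<and> Tplus z \<le> e 1 \<and> Tminus z \<le> e (-1) \<and> Qz z \<le> e \<rho>}"

definition Kplus' :: "(real \<Rightarrow> real) \<Rightarrow> ('n::finite) zpt set" where
  "Kplus' e = {z \<in> Zset. case z of (\<rho>, v, m, \<sigma>, p) \<Rightarrow>
     \<rho> = 1 \<and> m = v \<and> lambda_max (outer v v - \<sigma>) \<le> e 1}"

definition Kminus' :: "(real \<Rightarrow> real) \<Rightarrow> ('n::finite) zpt set" where
  "Kminus' e = {z \<in> Zset. case z of (\<rho>, v, m, \<sigma>, p) \<Rightarrow>
     \<rho> = -1 \<and> m = - v \<and> lambda_max (outer v v - \<sigma>) \<le> e (-1)}"

end

theory Submission
  imports Defs
begin

lemma sym_inner: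
  fixes A :: "real^'n::finite^'n"
  assumes "transpose A = A"
  shows "x \<bullet> (A *v y) = (A *v x) \<bullet> y"
proof -
  have "x \<bullet> (A *v y) = (x v* A) \<bullet> y" by (simp add: dot_lmul_matrix)
  also have "x v* A = transpose A *v x" by simp
  finally show ?thesis using assms by simp
qed

lemma eig_finite:
  fixes A :: "real^'n::finite^'n"
  assumes "transpose A = A"
  shows "finite {c. \<exists>x. x \<noteq> 0 \<and> A *v x = c *\<^sub>R x}"
proof -
  let ?S = "{c. \<exists>x. x \<noteq> 0 \<and> A *v x = c *\<^sub>R x}"
  define f where "f c = (SOME x. x \<noteq> 0 \<and> A *v x = c *\<^sub>R x)" for c
  have f: "f c \<noteq> 0 \<and> A *v f c = c *\<^sub>R f c" if "c \<in> ?S" for c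
    using that unfolding f_def by (metis (mono_tags, lifting) mem_Collect_eq someI_ex)
  have inj: "inj_on f ?S"
  proof (rule inj_onI)
    fix c d assume c: "c \<in> ?S" and d: "d \<in> ?S" and "f c = f d"
    then have "c *\<^sub>R f c = d *\<^sub>R f c" using f[OF c] f[OF d] by metis
    then show "c = d" using f[OF c] by (simp add: scaleR_cancel_right)
  qed
  have orth1: "orthogonal (f c) (f d)" if c: "c \<in> ?S" and d: "d \<in> ?S" and cd: "c \<noteq> d" for c d
  proof -
    have "c * (f c \<bullet> f d) = (A *v f c) \<bullet> f d" using f[OF c] by simp
    also have "\<dots> = f c \<bullet> (A *v f d)" using sym_inner[OF assms] by simp
    also have "\<dots> = d * (f c \<bullet> f d)" using f[OF d] by simp
    finally have "(c - d) * (f c \<bullet> f d) = 0" by (simp add: algebra_simps)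
    then show "orthogonal (f c) (f d)" using cd by (simp add: orthogonal_def)
  qed
  have orth: "pairwise orthogonal (f ` ?S)"
    unfolding pairwise_def using orth1 by blast
  have "0 \<notin> f ` ?S" using f by fastforce
  then have "independent (f ` ?S)" using pairwise_orthogonal_independent orth by blast
  then have "finite (f ` ?S)" using independent_bound by blast
  then show ?thesis using finite_imageD inj by blast
qed

lemma rayleigh:
  fixes A :: "real^'n::finite^'n"
  assumes "transpose A = A"
  shows "\<exists>x0. x0 \<noteq> 0 \<and> A *v x0 = (x0 \<bullet> (A *v x0)) *\<^sub>R x0 \<and> norm x0 = 1 \<and>
     (\<forall>y. y \<bullet> (A *v y) \<le> (x0 \<bullet> (A *v x0)) * (y \<bullet> y))"
proof -
  let ?f = "\<lambda>x. x \<bullet> (A *v x)"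
  have "compact (sphere (0::real^'n) 1)" by simp
  moreover have "sphere (0::real^'n) 1 \<noteq> {}"
    proof -
    have "axis undefined (1::real) \<in> sphere (0::real^'n) 1" by simp
    then show ?thesis by blast
  qed
  moreover have "continuous_on (sphere 0 1) ?f"
  proof -
    have "continuous_on UNIV ((*v) A)"
      by (rule linear_continuous_on) (rule matrix_vector_mul_bounded_linear)
    then have "continuous_on UNIV ?f"
      using continuous_on_inner[OF continuous_on_id] by blast
    then show ?thesis using continuous_on_subset by blast
  qed
  ultimately have "\<exists>x\<in>sphere 0 1. \<forall>y\<in>sphere 0 1. ?f y \<le> ?f x"
    by (rule continuous_attains_sup)
  then obtain x0 where x0: "x0 \<in> sphere 0 1" and mx: "\<And>y. y \<in> sphere 0 1 \<Longrightarrow> ?f y \<le> ?f x0"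
    by blast
  define c where "c = ?f x0"
  have n1: "norm x0 = 1" using x0 by simp
  have bound: "?f y \<le> c * (y \<bullet> y)" for y
  proof (cases "y = 0")
    case True then show ?thesis by simp
  next
    case False
    define u where "u = (1 / norm y) *\<^sub>R y"
    have "u \<in> sphere 0 1" using False by (simp add: u_def)
    then have "?f u \<le> c" using mx c_def by simp
    moreover have "?f y = (norm y)^2 * ?f u" using False
      by (simp add: u_def matrix_vector_mult_scaleR power2_eq_square)
    moreover have "y \<bullet> y = (norm y)^2" by (simp add: power2_norm_eq_inner)
    ultimately show ?thesis by (metis mult.commute mult_right_mono zero_le_power2)
  qed
  define w where "w = c *\<^sub>R x0 - A *v x0"
  define g where "g y = c * (y \<bullet> y) - ?f y" for y
  have gnn: "g y \<ge> 0" for y using bound[of y] by (simp add: g_def)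
  have g0: "g x0 = 0" using n1 by (simp add: g_def c_def power2_norm_eq_inner[symmetric])
  have sw: "w \<bullet> (A *v x0) = x0 \<bullet> (A *v w)" using sym_inner[OF assms] by (simp add: inner_commute)
  have e1: "(x0 + t *\<^sub>R w) \<bullet> (A *v (x0 + t *\<^sub>R w)) = ?f x0 + 2 * t * (w \<bullet> (A *v x0)) + t^2 * ?f w" for t
    using sw by (simp add: matrix_vector_right_distrib matrix_vector_mult_scaleR inner_add_left
        inner_add_right power2_eq_square algebra_simps)
  have e2: "(x0 + t *\<^sub>R w) \<bullet> (x0 + t *\<^sub>R w) = x0 \<bullet> x0 + 2 * t * (w \<bullet> x0) + t^2 * (w \<bullet> w)" for t
    by (simp add: inner_add_left inner_add_right power2_eq_square algebra_simps inner_commute)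
  have e3: "w \<bullet> w = c * (w \<bullet> x0) - w \<bullet> (A *v x0)"
    by (simp add: w_def inner_diff_right)
  have expand: "g (x0 + t *\<^sub>R w) = g x0 + 2 * t * (w \<bullet> w) + t^2 * g w" for t
    unfolding g_def e1 e2 e3 by (simp add: algebra_simps)
  define b where "b = w \<bullet> w"
  define s where "s = 1 / (g w + 1)"
  have s0: "s > 0" using gnn[of w] by (simp add: s_def)
  have s1: "s * g w < 1" using gnn[of w] by (simp add: s_def field_simps)
  define t where "t = - s * b"
  have "0 \<le> g (x0 + t *\<^sub>R w)" by (rule gnn)
  also have "\<dots> = 2 * t * b + t^2 * g w" using expand g0 b_def by simp
  also have "\<dots> = s * (b^2 * (s * g w - 2))"
    by (simp add: t_def power2_eq_square algebra_simps)
  finally have "0 \<le> b^2 * (s * g w - 2)" using s0 by (simp add: zero_le_mult_iff)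
  then have "b^2 \<le> 0" using s1 by (simp add: zero_le_mult_iff)
  then have "w = 0" using b_def by simp
  then have "A *v x0 = c *\<^sub>R x0" by (simp add: w_def)
  then show ?thesis using n1 bound c_def by (intro exI[of _ x0]) auto
qed

lemma lmax_props:
  fixes A :: "real^'n::finite^'n"
  assumes "transpose A = A"
  shows "(\<forall>y. y \<bullet> (A *v y) \<le> lambda_max A * (y \<bullet> y)) \<and>
         (\<exists>x. x \<noteq> 0 \<and> x \<bullet> (A *v x) = lambda_max A * (x \<bullet> x))"
proof -
  from rayleigh[OF assms] obtain x0 where x0: "x0 \<noteq> 0" "A *v x0 = (x0 \<bullet> (A *v x0)) *\<^sub>R x0"
    and b: "\<forall>y. y \<bullet> (A *v y) \<le> (x0 \<bullet> (A *v x0)) * (y \<bullet> y)"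
    by blast
  define c where "c = x0 \<bullet> (A *v x0)"
  have Ac: "A *v x0 = c *\<^sub>R x0" using x0(2) by (simp add: c_def)
  have bc: "y \<bullet> (A *v y) \<le> c * (y \<bullet> y)" for y using b by (simp add: c_def)
  let ?S = "{c. \<exists>x. x \<noteq> 0 \<and> A *v x = c *\<^sub>R x}"
  have cS: "c \<in> ?S" using x0(1) Ac by blast
  have le: "d \<le> c" if "d \<in> ?S" for d
  proof -
    obtain x where x: "x \<noteq> 0" "A *v x = d *\<^sub>R x" using \<open>d \<in> ?S\<close> by blast
    have "d * (x \<bullet> x) = x \<bullet> (A *v x)" using x by simp
    also have "\<dots> \<le> c * (x \<bullet> x)" by (rule bc)
    finally show "d \<le> c" using x by simp
  qed
  have lc: "lambda_max A = c"
    unfolding lambda_max_def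
    by (rule Max_eqI[OF eig_finite[OF assms]]) (use cS le in auto)
  have "x0 \<bullet> (A *v x0) = c * (x0 \<bullet> x0)"
    unfolding Ac by simp
  then show ?thesis using bc x0(1) unfolding lc by blast

qed

lemma lmax_le_iff:
  fixes A :: "real^'n::finite^'n"
  assumes "transpose A = A"
  shows "lambda_max A \<le> c \<longleftrightarrow> (\<forall>y. y \<bullet> (A *v y) \<le> c * (y \<bullet> y))"
proof
  assume "lambda_max A \<le> c"
  then show "\<forall>y. y \<bullet> (A *v y) \<le> c * (y \<bullet> y)"
  proof (intro allI)
    fix y
    have "y \<bullet> (A *v y) \<le> lambda_max A * (y \<bullet> y)" using lmax_props[OF assms] by blast
    also have "\<dots> \<le> c * (y \<bullet> y)" using \<open>lambda_max A \<le> c\<close> by (simp add: mult_right_mono)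
    finally show "y \<bullet> (A *v y) \<le> c * (y \<bullet> y)" .
  qed
next
  assume h: "\<forall>y. y \<bullet> (A *v y) \<le> c * (y \<bullet> y)"
  obtain x where x: "x \<noteq> 0" "x \<bullet> (A *v x) = lambda_max A * (x \<bullet> x)"
    using lmax_props[OF assms] by blast
  have "x \<bullet> (A *v x) \<le> c * (x \<bullet> x)" using h by blast
  then have "lambda_max A * (x \<bullet> x) \<le> c * (x \<bullet> x)" using x(2) by simp
  moreover have "x \<bullet> x > 0" using x(1) by simp
  ultimately show "lambda_max A \<le> c" by simp
qed

lemma outer_mv: "outer u w *v x = (w \<bullet> x) *\<^sub>R u"
  by (simp add: vec_eq_iff matrix_vector_mult_def outer_def inner_vec_def sum_distrib_left mult_ac)

lemma qf_outer: "x \<bullet> (outer u w *v x) = (x \<bullet> u) * (x \<bullet> w)"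
  by (simp add: outer_mv inner_commute)

lemma transpose_outer: "transpose (outer u w) = outer w u"
  by (simp add: transpose_def outer_def vec_eq_iff mult.commute)

lemma transpose_lin:
  fixes A B :: "real^'n::finite^'n"
  shows "transpose (A + B) = transpose A + transpose B"
    "transpose (A - B) = transpose A - transpose B"
    "transpose (c *\<^sub>R A) = c *\<^sub>R transpose A"
  by (simp_all add: transpose_def vec_eq_iff)

lemma smv: "((c::real) *\<^sub>R (A::real^'n::finite^'m::finite)) *v x = c *\<^sub>R (A *v x)"
  by (simp add: vec_eq_iff matrix_vector_mult_def sum_distrib_left mult.assoc vector_scaleR_component)

lemma Mz_sym:
  assumes "transpose \<sigma> = \<sigma>"
  shows "transpose (Mz (\<rho>, v, m, \<sigma>, p)) = Mz (\<rho>, v, m, \<sigma>, p)"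
  using assms by (simp add: Mz_def transpose_lin transpose_outer add.commute)

lemma qf_Mz:
  "x \<bullet> (Mz (\<rho>, v, m, \<sigma>, p) *v x) =
     ((x \<bullet> v)^2 - 2 * \<rho> * ((x \<bullet> m) * (x \<bullet> v)) + (x \<bullet> m)^2) / (1 - \<rho>^2) - x \<bullet> (\<sigma> *v x)"
proof -
  define X where "X = outer v v - \<rho> *\<^sub>R (outer m v + outer v m) + outer m m"
  have hX: "x \<bullet> (X *v x) = (x \<bullet> v)^2 - 2 * \<rho> * ((x \<bullet> m) * (x \<bullet> v)) + (x \<bullet> m)^2"
    unfolding X_def
    by (simp add: smv matrix_vector_mult_diff_rdistrib matrix_vector_mult_add_rdistrib
      inner_diff_right inner_add_right qf_outer power2_eq_square)
  have "Mz (\<rho>, v, m, \<sigma>, p) = (1 / (1 - \<rho>^2)) *\<^sub>R X - \<sigma>" by (simp add: Mz_def X_def)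
  then have "x \<bullet> (Mz (\<rho>, v, m, \<sigma>, p) *v x) = (1 / (1 - \<rho>^2)) * (x \<bullet> (X *v x)) - x \<bullet> (\<sigma> *v x)"
    by (simp add: smv matrix_vector_mult_diff_rdistrib inner_diff_right)
  then show ?thesis unfolding hX by simp
qed

lemma qol:
  fixes r1 r2 s1 s2 u w :: real
  assumes "r1 > 0" "r2 > 0" "u \<ge> 0" "w \<ge> 0"
  shows "(u * s1 + w * s2)^2 / (u * r1 + w * r2) \<le> u * s1^2/r1 + w * s2^2/r2"
proof (cases "u * r1 + w * r2 = 0")
  case True then show ?thesis using assms by simp
next
  case False
  then have D: "u * r1 + w * r2 > 0" using assms by (simp add: add_nonneg_nonneg order_le_neq_trans)
  have id: "(u * s1^2 * r2 + w * s2^2 * r1) * (u * r1 + w * r2) - (u * s1 + w * s2)^2 * (r1 * r2)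
      = u*w*(s1 * r2 - s2 * r1)^2"
    by (simp add: power2_eq_square algebra_simps)
  have "u*w*(s1 * r2 - s2 * r1)^2 \<ge> 0" using assms by simp
  then have key: "(u * s1 + w * s2)^2 * (r1 * r2) \<le> (u * s1^2 * r2 + w * s2^2 * r1) * (u * r1 + w * r2)"
    using id by linarith
  have "u * s1^2/r1 + w * s2^2/r2 = (u * s1^2 * r2 + w * s2^2 * r1) / (r1 * r2)"
    using assms by (simp add: field_simps)
  moreover have "(u * s1 + w * s2)^2 / (u * r1 + w * r2) \<le> (u * s1^2 * r2 + w * s2^2 * r1) / (r1 * r2)"
    using key D assms by (simp add: field_simps)
  ultimately show ?thesis by simp
qed

definition Gf :: "real \<Rightarrow> real \<Rightarrow> real \<Rightarrow> real" where
  "Gf \<rho> a b = (a^2 - 2 * \<rho> * (b * a) + b^2) / (1 - \<rho>^2)"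

lemma qf_Mz': "x \<bullet> (Mz (\<rho>, v, m, \<sigma>, p) *v x) = Gf \<rho> (x \<bullet> v) (x \<bullet> m) - x \<bullet> (\<sigma> *v x)"
  by (simp add: qf_Mz Gf_def)

lemma fr2:
  fixes P M X Y :: real
  assumes "P > 0" "M > 0"
  shows "X / P / 2 + Y / M / 2 = (X * M + Y * P) / (2 * (P * M))"
  using assms by (simp add: field_simps)

lemma Gf_split:
  assumes "-1 < \<rho>" "\<rho> < 1"
  shows "Gf \<rho> a b = (a + b)^2 / (1 + \<rho>) / 2 + (a - b)^2 / (1 - \<rho>) / 2"
proof -
  have p: "1 + \<rho> > 0" "1 - \<rho> > 0" using assms by auto
  have q: "1 - \<rho>^2 = (1 + \<rho>) * (1 - \<rho>)" by (simp add: power2_eq_square algebra_simps)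
  have r: "(a + b)^2 / (1 + \<rho>) / 2 + (a - b)^2 / (1 - \<rho>) / 2
      = ((a + b)^2 * (1 - \<rho>) + (a - b)^2 * (1 + \<rho>)) / (2 * ((1 + \<rho>) * (1 - \<rho>)))"
    using p by (rule fr2)
  have n: "(a + b)^2 * (1 - \<rho>) + (a - b)^2 * (1 + \<rho>) = 2 * (a^2 - 2 * \<rho> * (b * a) + b^2)"
    by (simp add: power2_eq_square algebra_simps)
  show ?thesis unfolding Gf_def q r n by (rule mult_divide_mult_cancel_left[symmetric]) simp
qed

lemma Gf_ge:
  assumes "-1 < \<rho>" "\<rho> < 1"
  shows "b^2 \<le> Gf \<rho> a b"
proof -
  have p: "1 - \<rho>^2 > 0" using assms by (simp add: abs_less_iff power2_less_1_iff)
  have "Gf \<rho> a b = (a - \<rho> * b)^2 / (1 - \<rho>^2) + b^2"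
    unfolding Gf_def using p by (simp add: field_simps power2_eq_square)
  moreover have "(a - \<rho> * b)^2 / (1 - \<rho>^2) \<ge> 0" using p by simp
  ultimately show ?thesis by simp
qed

lemma Gf_conv:
  assumes "-1 < \<rho>1" "\<rho>1 < 1" "-1 < \<rho>2" "\<rho>2 < 1" "0 \<le> u" "u \<le> 1"
  shows "Gf (u * \<rho>1 + (1 - u) * \<rho>2) (u * a1 + (1 - u) * a2) (u * b1 + (1 - u) * b2)
     \<le> u * Gf \<rho>1 a1 b1 + (1 - u) * Gf \<rho>2 a2 b2"
proof -
  let ?r = "u * \<rho>1 + (1 - u) * \<rho>2"
  have r1': "-1 < ?r \<and> ?r < 1"
  proof (cases "u = 0")
    case True then show ?thesis using assms by auto
  next
    case False
    then have u0: "u > 0" using assms by simp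
    have "u * \<rho>1 > - u" using mult_strict_left_mono[of "-1" \<rho>1 u] u0 assms by simp
    moreover have "u * \<rho>1 < u" using mult_strict_left_mono[of \<rho>1 1 u] u0 assms by simp
    moreover have "(1 - u) * \<rho>2 \<ge> - (1 - u)" using mult_left_mono[of "-1" \<rho>2 "1 - u"] assms by simp
    moreover have "(1 - u) * \<rho>2 \<le> (1 - u)" using mult_left_mono[of \<rho>2 1 "1 - u"] assms by simp
    ultimately show ?thesis by linarith
  qed
  then have r1: "-1 < ?r" "?r < 1" by auto
  have w0: "0 \<le> 1 - u" using assms by simp
  have A: "(u * (a1 + b1) + (1 - u) * (a2 + b2))^2 / (u * (1 + \<rho>1) + (1 - u) * (1 + \<rho>2))
      \<le> u * (a1 + b1)^2 / (1 + \<rho>1) + (1 - u) * (a2 + b2)^2 / (1 + \<rho>2)"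
    using assms by (intro qol) auto
  have B: "(u * (a1 - b1) + (1 - u) * (a2 - b2))^2 / (u * (1 - \<rho>1) + (1 - u) * (1 - \<rho>2))
      \<le> u * (a1 - b1)^2 / (1 - \<rho>1) + (1 - u) * (a2 - b2)^2 / (1 - \<rho>2)"
    using assms by (intro qol) auto
  have e1: "u * (a1 + b1) + (1 - u) * (a2 + b2) = (u * a1 + (1 - u) * a2) + (u * b1 + (1 - u) * b2)"
    by (simp add: algebra_simps)
  have e2: "u * (a1 - b1) + (1 - u) * (a2 - b2) = (u * a1 + (1 - u) * a2) - (u * b1 + (1 - u) * b2)"
    by (simp add: algebra_simps)
  have e3: "u * (1 + \<rho>1) + (1 - u) * (1 + \<rho>2) = 1 + ?r" by (simp add: algebra_simps)
  have e4: "u * (1 - \<rho>1) + (1 - u) * (1 - \<rho>2) = 1 - ?r" by (simp add: algebra_simps)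
  have "Gf ?r (u * a1 + (1 - u) * a2) (u * b1 + (1 - u) * b2)
     = (u * (a1 + b1) + (1 - u) * (a2 + b2))^2 / (u * (1 + \<rho>1) + (1 - u) * (1 + \<rho>2)) / 2
       + (u * (a1 - b1) + (1 - u) * (a2 - b2))^2 / (u * (1 - \<rho>1) + (1 - u) * (1 - \<rho>2)) / 2"
    unfolding e1 e2 e3 e4 Gf_split[OF r1] by simp
  also have "\<dots> \<le> (u * (a1 + b1)^2 / (1 + \<rho>1) + (1 - u) * (a2 + b2)^2 / (1 + \<rho>2)) / 2
       + (u * (a1 - b1)^2 / (1 - \<rho>1) + (1 - u) * (a2 - b2)^2 / (1 - \<rho>2)) / 2"
    by (intro add_mono divide_right_mono A B) auto
  also have "\<dots> = u * Gf \<rho>1 a1 b1 + (1 - u) * Gf \<rho>2 a2 b2"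
    unfolding Gf_split[OF assms(1,2)] Gf_split[OF assms(3,4)] by (simp add: algebra_simps add_divide_distrib)
  finally show ?thesis .
qed

lemma sqrt_iff:
  fixes N c d n :: real
  assumes "n > 0" "c > 0" "d > 0" "N \<ge> 0"
  shows "N^2 / (n * d^2) \<le> c \<longleftrightarrow> N \<le> sqrt (n * c) * d"
    and "N^2 / (n * d^2) < c \<longleftrightarrow> N < sqrt (n * c) * d"
proof -
  have X: "sqrt (n * c) * d = sqrt (n * c * d^2)" using assms by (simp add: real_sqrt_mult)
  have N: "N = sqrt (N^2)" using assms by simp
  have "N^2 / (n * d^2) \<le> c \<longleftrightarrow> N^2 \<le> n * c * d^2" using assms
    by (simp add: pos_divide_le_eq mult_ac)
  also have "\<dots> \<longleftrightarrow> sqrt (N^2) \<le> sqrt (n * c * d^2)" by (rule real_sqrt_le_iff[symmetric])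
  finally show "N^2 / (n * d^2) \<le> c \<longleftrightarrow> N \<le> sqrt (n * c) * d" using X N by simp
  have "N^2 / (n * d^2) < c \<longleftrightarrow> N^2 < n * c * d^2" using assms
    by (simp add: pos_divide_less_eq mult_ac)
  also have "\<dots> \<longleftrightarrow> sqrt (N^2) < sqrt (n * c * d^2)" by (rule real_sqrt_less_iff[symmetric])
  finally show "N^2 / (n * d^2) < c \<longleftrightarrow> N < sqrt (n * c) * d" using X N by simp
qed

lemma Tplus_iff:
  assumes "-1 < \<rho>" "c > 0"
  shows "Tplus ((\<rho>, v, m, \<sigma>, p) :: 'n::finite zpt) \<le> c \<longleftrightarrow> norm (m + v) \<le> sqrt (real CARD('n) * c) * (\<rho> + 1)"
    and "Tplus ((\<rho>, v, m, \<sigma>, p) :: 'n::finite zpt) < c \<longleftrightarrow> norm (m + v) < sqrt (real CARD('n) * c) * (\<rho> + 1)"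
  using sqrt_iff[of "real CARD('n)" c "\<rho> + 1" "norm (m + v)"] assms by (simp_all add: Tplus_def)

lemma Tminus_iff:
  assumes "\<rho> < 1" "c > 0"
  shows "Tminus ((\<rho>, v, m, \<sigma>, p) :: 'n::finite zpt) \<le> c \<longleftrightarrow> norm (m - v) \<le> sqrt (real CARD('n) * c) * (1 - \<rho>)"
    and "Tminus ((\<rho>, v, m, \<sigma>, p) :: 'n::finite zpt) < c \<longleftrightarrow> norm (m - v) < sqrt (real CARD('n) * c) * (1 - \<rho>)"
proof -
  have "(\<rho> - 1)^2 = (1 - \<rho>)^2" by (simp add: power2_commute)
  then show "Tminus ((\<rho>, v, m, \<sigma>, p) :: 'n::finite zpt) \<le> c \<longleftrightarrow> norm (m - v) \<le> sqrt (real CARD('n) * c) * (1 - \<rho>)"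
    and "Tminus ((\<rho>, v, m, \<sigma>, p) :: 'n::finite zpt) < c \<longleftrightarrow> norm (m - v) < sqrt (real CARD('n) * c) * (1 - \<rho>)"
  using sqrt_iff[of "real CARD('n)" c "1 - \<rho>" "norm (m - v)"] assms by (simp_all add: Tminus_def)
qed

lemma Q_props:
  assumes "transpose \<sigma> = \<sigma>"
  shows "(\<forall>x. Gf \<rho> (x \<bullet> v) (x \<bullet> m) - x \<bullet> (\<sigma> *v x) \<le> Qz (\<rho>, v, m, \<sigma>, p) * (x \<bullet> x))"
    and "\<exists>x. x \<noteq> 0 \<and> Gf \<rho> (x \<bullet> v) (x \<bullet> m) - x \<bullet> (\<sigma> *v x) = Qz (\<rho>, v, m, \<sigma>, p) * (x \<bullet> x)"
    and "Qz (\<rho>, v, m, \<sigma>, p) \<le> c \<longleftrightarrow> (\<forall>x. Gf \<rho> (x \<bullet> v) (x \<bullet> m) - x \<bullet> (\<sigma> *v x) \<le> c * (x \<bullet> x))"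
  using lmax_props[OF Mz_sym[OF assms, of \<rho> v m p]] lmax_le_iff[OF Mz_sym[OF assms, of \<rho> v m p]]
  unfolding Qz_def qf_Mz' by auto

lemma stf_comb:
  assumes "sym_tracefree A" "sym_tracefree B"
  shows "sym_tracefree (u *\<^sub>R A + w *\<^sub>R B)"
  using assms unfolding sym_tracefree_def
  by (simp add: transpose_lin sum.distrib flip: sum_distrib_left)

lemma memU: "((\<rho>, v, m, \<sigma>, p) \<in> Uset e) \<longleftrightarrow> sym_tracefree \<sigma> \<and> -1 < \<rho> \<and> \<rho> < 1 \<and>
   Tplus (\<rho>, v, m, \<sigma>, p) < e 1 \<and> Tminus (\<rho>, v, m, \<sigma>, p) < e (-1) \<and> Qz (\<rho>, v, m, \<sigma>, p) < e \<rho>"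
  by (simp add: Uset_def Zset_def)

lemma memU0: "((\<rho>, v, m, \<sigma>, p) \<in> U0bar e) \<longleftrightarrow> sym_tracefree \<sigma> \<and> -1 < \<rho> \<and> \<rho> < 1 \<and>
   Tplus (\<rho>, v, m, \<sigma>, p) \<le> e 1 \<and> Tminus (\<rho>, v, m, \<sigma>, p) \<le> e (-1) \<and> Qz (\<rho>, v, m, \<sigma>, p) \<le> e \<rho>"
  by (simp add: U0bar_def Zset_def)

lemma stf_sym: "sym_tracefree \<sigma> \<Longrightarrow> transpose \<sigma> = \<sigma>"
  by (simp add: sym_tracefree_def)

lemma norm_comb_le:
  fixes x y :: "'a::real_normed_vector"
  assumes "0 \<le> u" "u \<le> 1"
  shows "norm (u *\<^sub>R x + (1 - u) *\<^sub>R y) \<le> u * norm x + (1 - u) * norm y"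
  using assms norm_triangle_ineq[of "u *\<^sub>R x" "(1 - u) *\<^sub>R y"] by simp

lemma mix:
  fixes e :: "real \<Rightarrow> real"
  assumes aff: "\<And>r. e r = \<alpha> * r + \<beta>" and ep: "e 1 > 0" "e (-1) > 0"
    and z1: "((\<rho>1, v1, m1, \<sigma>1, p1) :: 'n::finite zpt) \<in> U0bar e"
    and z2: "((\<rho>2, v2, m2, \<sigma>2, p2) :: 'n zpt) \<in> Uset e"
    and u: "0 \<le> u" "u < 1"
  shows "((u * \<rho>1 + (1 - u) * \<rho>2, u *\<^sub>R v1 + (1 - u) *\<^sub>R v2, u *\<^sub>R m1 + (1 - u) *\<^sub>R m2,
     u *\<^sub>R \<sigma>1 + (1 - u) *\<^sub>R \<sigma>2, u * p1 + (1 - u) * p2) :: 'n zpt) \<in> Uset e"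
proof -
  let ?r = "u * \<rho>1 + (1 - u) * \<rho>2"
  let ?v = "u *\<^sub>R v1 + (1 - u) *\<^sub>R v2"
  let ?m = "u *\<^sub>R m1 + (1 - u) *\<^sub>R m2"
  let ?s = "u *\<^sub>R \<sigma>1 + (1 - u) *\<^sub>R \<sigma>2"
  let ?p = "u * p1 + (1 - u) * p2"
  define K1 where "K1 = sqrt (real CARD('n) * e 1)"
  define K2 where "K2 = sqrt (real CARD('n) * e (-1))"
  have w: "1 - u > 0" using u by simp
  from z1 have s1: "sym_tracefree \<sigma>1" and r1: "-1 < \<rho>1" "\<rho>1 < 1"
    and T1: "Tplus (\<rho>1, v1, m1, \<sigma>1, p1) \<le> e 1" "Tminus (\<rho>1, v1, m1, \<sigma>1, p1) \<le> e (-1)"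
    and Q1: "Qz (\<rho>1, v1, m1, \<sigma>1, p1) \<le> e \<rho>1"
    by (simp_all add: memU0)
  from z2 have s2: "sym_tracefree \<sigma>2" and r2: "-1 < \<rho>2" "\<rho>2 < 1"
    and T2: "Tplus (\<rho>2, v2, m2, \<sigma>2, p2) < e 1" "Tminus (\<rho>2, v2, m2, \<sigma>2, p2) < e (-1)"
    and Q2: "Qz (\<rho>2, v2, m2, \<sigma>2, p2) < e \<rho>2"
    by (simp_all add: memU)
  have N1: "norm (m1 + v1) \<le> K1 * (\<rho>1 + 1)" "norm (m1 - v1) \<le> K2 * (1 - \<rho>1)"
    using T1 Tplus_iff(1)[OF r1(1) ep(1), where v=v1 and m=m1 and \<sigma>=\<sigma>1 and p=p1] Tminus_iff(1)[OF r1(2) ep(2), where v=v1 and m=m1 and \<sigma>=\<sigma>1 and p=p1] by (simp_all add: K1_def K2_def)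
  have N2: "norm (m2 + v2) < K1 * (\<rho>2 + 1)" "norm (m2 - v2) < K2 * (1 - \<rho>2)"
    using T2 Tplus_iff(2)[OF r2(1) ep(1), where v=v2 and m=m2 and \<sigma>=\<sigma>2 and p=p2] Tminus_iff(2)[OF r2(2) ep(2), where v=v2 and m=m2 and \<sigma>=\<sigma>2 and p=p2] by (simp_all add: K1_def K2_def)
  have ss: "sym_tracefree ?s" using stf_comb[OF s1 s2] .
  have rr': "-1 < ?r \<and> ?r < 1"
  proof -
    have "u * \<rho>1 \<ge> - u" using mult_left_mono[of "-1" \<rho>1 u] u r1 by simp
    moreover have "u * \<rho>1 \<le> u" using mult_left_mono[of \<rho>1 1 u] u r1 by simp
    moreover have "(1 - u) * \<rho>2 > - (1 - u)" using mult_strict_left_mono[of "-1" \<rho>2 "1 - u"] w r2 by simp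
    moreover have "(1 - u) * \<rho>2 < (1 - u)" using mult_strict_left_mono[of \<rho>2 1 "1 - u"] w r2 by simp
    ultimately show ?thesis by linarith
  qed
  then have rr: "-1 < ?r" "?r < 1" by auto
  have Tp: "norm (?m + ?v) < K1 * (?r + 1)"
  proof -
    have "?m + ?v = u *\<^sub>R (m1 + v1) + (1 - u) *\<^sub>R (m2 + v2)" by (simp add: algebra_simps)
    then have "norm (?m + ?v) \<le> u * norm (m1 + v1) + (1 - u) * norm (m2 + v2)"
      using norm_comb_le[of u] u by simp
    also have "\<dots> < u * (K1 * (\<rho>1 + 1)) + (1 - u) * (K1 * (\<rho>2 + 1))"
      using mult_left_mono[OF N1(1) u(1)] mult_strict_left_mono[OF N2(1) w] by linarith
    also have "\<dots> = K1 * (?r + 1)" by (simp add: algebra_simps)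
    finally show ?thesis .
  qed
  have Tm: "norm (?m - ?v) < K2 * (1 - ?r)"
  proof -
    have "?m - ?v = u *\<^sub>R (m1 - v1) + (1 - u) *\<^sub>R (m2 - v2)" by (simp add: algebra_simps)
    then have "norm (?m - ?v) \<le> u * norm (m1 - v1) + (1 - u) * norm (m2 - v2)"
      using norm_comb_le[of u] u by simp
    also have "\<dots> < u * (K2 * (1 - \<rho>1)) + (1 - u) * (K2 * (1 - \<rho>2))"
      using mult_left_mono[OF N1(2) u(1)] mult_strict_left_mono[OF N2(2) w] by linarith
    also have "\<dots> = K2 * (1 - ?r)" by (simp add: algebra_simps)
    finally show ?thesis .
  qed
  have Qr: "Qz (?r, ?v, ?m, ?s, ?p) < e ?r"
  proof -
    obtain x where x: "x \<noteq> 0"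
      and hx: "Gf ?r (x \<bullet> ?v) (x \<bullet> ?m) - x \<bullet> (?s *v x) = Qz (?r, ?v, ?m, ?s, ?p) * (x \<bullet> x)"
      using Q_props(2)[OF stf_sym[OF ss]] by blast
    have xx: "x \<bullet> x > 0" using x by simp
    have i1: "x \<bullet> ?v = u * (x \<bullet> v1) + (1 - u) * (x \<bullet> v2)" by (simp add: inner_add_right)
    have i2: "x \<bullet> ?m = u * (x \<bullet> m1) + (1 - u) * (x \<bullet> m2)" by (simp add: inner_add_right)
    have i3: "x \<bullet> (?s *v x) = u * (x \<bullet> (\<sigma>1 *v x)) + (1 - u) * (x \<bullet> (\<sigma>2 *v x))"
      by (simp add: matrix_vector_mult_add_rdistrib smv inner_add_right)
    have "Qz (?r, ?v, ?m, ?s, ?p) * (x \<bullet> x)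
        \<le> u * (Gf \<rho>1 (x \<bullet> v1) (x \<bullet> m1) - x \<bullet> (\<sigma>1 *v x))
          + (1 - u) * (Gf \<rho>2 (x \<bullet> v2) (x \<bullet> m2) - x \<bullet> (\<sigma>2 *v x))"
      using Gf_conv[OF r1 r2 u(1) less_imp_le[OF u(2)], of "x \<bullet> v1" "x \<bullet> v2" "x \<bullet> m1" "x \<bullet> m2"]
      unfolding hx[symmetric] i1 i2 i3 by (simp add: algebra_simps)
    also have "\<dots> \<le> u * (e \<rho>1 * (x \<bullet> x)) + (1 - u) * (Qz (\<rho>2, v2, m2, \<sigma>2, p2) * (x \<bullet> x))"
    proof -
      have a: "Gf \<rho>1 (x \<bullet> v1) (x \<bullet> m1) - x \<bullet> (\<sigma>1 *v x) \<le> e \<rho>1 * (x \<bullet> x)"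
        using Q_props(3)[OF stf_sym[OF s1]] Q1 by blast
      have b: "Gf \<rho>2 (x \<bullet> v2) (x \<bullet> m2) - x \<bullet> (\<sigma>2 *v x) \<le> Qz (\<rho>2, v2, m2, \<sigma>2, p2) * (x \<bullet> x)"
        using Q_props(1)[OF stf_sym[OF s2]] by blast
      show ?thesis using mult_left_mono[OF a u(1)] mult_left_mono[OF b less_imp_le[OF w]] by linarith
    qed
    also have "\<dots> < u * (e \<rho>1 * (x \<bullet> x)) + (1 - u) * (e \<rho>2 * (x \<bullet> x))"
    proof -
      have "Qz (\<rho>2, v2, m2, \<sigma>2, p2) * (x \<bullet> x) < e \<rho>2 * (x \<bullet> x)" using Q2 xx by simp
      then show ?thesis using mult_strict_left_mono[OF _ w] by simp
    qed
    also have "\<dots> = e ?r * (x \<bullet> x)" unfolding aff by (simp add: algebra_simps)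
    finally show ?thesis using xx by simp
  qed
  show ?thesis unfolding memU
    using ss rr Qr Tplus_iff(2)[OF rr(1) ep(1), where v="?v" and m="?m" and \<sigma>="?s" and p="?p"] Tminus_iff(2)[OF rr(2) ep(2), where v="?v" and m="?m" and \<sigma>="?s" and p="?p"] Tp Tm
    by (simp add: K1_def K2_def)
qed

lemma U_sub_U0: "Uset e \<subseteq> U0bar e"
  unfolding Uset_def U0bar_def by (auto simp: less_imp_le)

lemma convexU:
  fixes e :: "real \<Rightarrow> real"
  assumes aff: "\<And>r. e r = \<alpha> * r + \<beta>" and ep: "e 1 > 0" "e (-1) > 0"
  shows "convex (Uset e :: 'n::finite zpt set)"
proof (rule convexI)
  fix z1 z2 :: "'n zpt" and u w :: real
  assume z1: "z1 \<in> Uset e" and z2: "z2 \<in> Uset e" and u: "0 \<le> u" and w: "0 \<le> w" and uw: "u + w = 1"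
  show "u *\<^sub>R z1 + w *\<^sub>R z2 \<in> Uset e"
  proof (cases "u = 1")
    case True then show ?thesis using z1 uw by simp
  next
    case False
    then have u1: "u < 1" using w uw by simp
    obtain \<rho>1 v1 m1 \<sigma>1 p1 where e1: "z1 = (\<rho>1, v1, m1, \<sigma>1, p1)" by (cases z1) auto
    obtain \<rho>2 v2 m2 \<sigma>2 p2 where e2: "z2 = (\<rho>2, v2, m2, \<sigma>2, p2)" by (cases z2) auto
    have "z1 \<in> U0bar e" using z1 U_sub_U0 by blast
    from mix[OF aff ep this[unfolded e1] z2[unfolded e2] u u1]
    show ?thesis using uw unfolding e1 e2 by (simp add: eq_diff_eq[symmetric] add.commute)
  qed
qed

lemma trace_bound:
  fixes v :: "real^'n::finite" and \<sigma> :: "real^'n^'n"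
  assumes "sym_tracefree \<sigma>" and h: "\<forall>x. (x \<bullet> v)^2 - x \<bullet> (\<sigma> *v x) \<le> c * (x \<bullet> x)"
  shows "(norm v)^2 \<le> real CARD('n) * c"
proof -
  have ax: "(v $ i)^2 - \<sigma> $ i $ i \<le> c" for i
  proof -
    have a1: "axis i (1::real) \<bullet> v = v $ i" by (simp add: inner_axis')
    have a2: "axis i (1::real) \<bullet> (\<sigma> *v axis i 1) = \<sigma> $ i $ i"
      by (simp add: inner_axis' matrix_vector_mult_basis column_def)
    have a3: "axis i (1::real) \<bullet> axis i 1 = 1" by (simp add: inner_axis_axis)
    show ?thesis using h[rule_format, of "axis i 1"] a1 a2 a3 by simp
  qed
  have "(\<Sum>i\<in>UNIV. (v $ i)^2 - \<sigma> $ i $ i) \<le> (\<Sum>i\<in>(UNIV::'n set). c)"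
    by (rule sum_mono) (rule ax)
  moreover have "(\<Sum>i\<in>UNIV. \<sigma> $ i $ i) = 0" using assms(1) by (simp add: sym_tracefree_def)
  moreover have "(norm v)^2 = (\<Sum>i\<in>UNIV. (v $ i)^2)"
    by (simp only: power2_norm_eq_inner) (simp add: inner_vec_def power2_eq_square)
  ultimately show ?thesis by (simp add: sum_subtractf)
qed

lemma closure_path:
  fixes \<gamma> :: "real \<Rightarrow> 'a::topological_space"
  assumes lim: "(\<gamma> \<longlongrightarrow> z) (at_right 0)" and inS: "\<And>t. 0 < t \<Longrightarrow> t < 1 \<Longrightarrow> \<gamma> t \<in> S"
  shows "z \<in> closure S"
proof (rule Lim_in_closed_set[OF closed_closure _ _ lim])
  show "\<forall>\<^sub>F x in at_right 0. \<gamma> x \<in> closure S"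
    using eventually_at_right_real[of 0 1]
    by (rule eventually_mono) (use inS closure_subset in auto)
  show "at_right (0::real) \<noteq> bot" by simp
qed

lemma Gf_K:
  assumes r0: "\<rho>0 = 1 \<or> \<rho>0 = -1" and t: "0 < t" "t < 1"
  shows "Gf ((1 - t) * \<rho>0) a (\<rho>0 * a) = 2 * a^2 / (2 - t)"
proof -
  have sq: "\<rho>0^2 = 1" using r0 by auto
  have d: "1 - ((1 - t) * \<rho>0)^2 = t * (2 - t)"
    unfolding power_mult_distrib sq by (simp add: power2_eq_square algebra_simps)
  have n: "a^2 - 2 * ((1 - t) * \<rho>0) * (\<rho>0 * a * a) + (\<rho>0 * a)^2 = (2 * a^2) * t"
    using r0 by (auto simp: power2_eq_square algebra_simps)
  have "Gf ((1 - t) * \<rho>0) a (\<rho>0 * a) = (2 * a^2) * t / (t * (2 - t))"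
    unfolding Gf_def d n[symmetric] by simp
  also have "\<dots> = 2 * a^2 / (2 - t)" using t by simp
  finally show ?thesis .
qed

lemma kpath:
  fixes e :: "real \<Rightarrow> real" and v :: "real^'n::finite"
  assumes aff: "\<And>r. e r = \<alpha> * r + \<beta>" and ep: "e 1 > 0" "e (-1) > 0"
    and r0: "\<rho>0 = 1 \<or> \<rho>0 = -1" and mv: "m = \<rho>0 *\<^sub>R v" and s: "sym_tracefree \<sigma>"
    and h: "\<forall>x. (x \<bullet> v)^2 - x \<bullet> (\<sigma> *v x) \<le> e \<rho>0 * (x \<bullet> x)"
    and t: "0 < t" "t < 1"
  shows "(((1 - t) * \<rho>0, (1 - t) *\<^sub>R v, (1 - t) *\<^sub>R m, (1 - t) *\<^sub>R \<sigma>, p) :: 'n zpt) \<in> Uset e"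
proof -
  let ?r = "(1 - t) * \<rho>0"
  let ?v = "(1 - t) *\<^sub>R v"
  let ?m = "(1 - t) *\<^sub>R m"
  let ?s = "(1 - t) *\<^sub>R \<sigma>"
  define K1 where "K1 = sqrt (real CARD('n) * e 1)"
  define K2 where "K2 = sqrt (real CARD('n) * e (-1))"
  have K1p: "K1 > 0" "K2 > 0" using ep by (simp_all add: K1_def K2_def)
  have b0: "\<beta> > 0" using ep aff[of 1] aff[of "-1"] by simp
  have rr: "-1 < ?r" "?r < 1" using r0 t by auto
  have ss: "sym_tracefree ?s" using stf_comb[OF s s, of "1 - t" 0] by simp
  have nv: "(norm v)^2 \<le> real CARD('n) * e \<rho>0" by (rule trace_bound[OF s h])
  have Tp: "norm (?m + ?v) < K1 * (?r + 1)"
  proof (cases "\<rho>0 = 1")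
    case True
    then have "norm v \<le> K1" using nv unfolding K1_def by (simp add: real_le_rsqrt)
    moreover have "?m + ?v = (2 * (1 - t)) *\<^sub>R v" using True mv by (simp add: scaleR_left_distrib[symmetric])
    ultimately have "norm (?m + ?v) \<le> 2 * (1 - t) * K1" using t
      by (simp add: mult_left_mono)
    also have "\<dots> < K1 * (?r + 1)" using True K1p t by (simp add: algebra_simps)
    finally show ?thesis .
  next
    case False
    then have "\<rho>0 = -1" using r0 by simp
    then show ?thesis using mv K1p t by simp
  qed
  have Tm: "norm (?m - ?v) < K2 * (1 - ?r)"
  proof (cases "\<rho>0 = -1")
    case True
    then have "norm v \<le> K2" using nv unfolding K2_def by (simp add: real_le_rsqrt)
    moreover have "?m - ?v = (- 2 * (1 - t)) *\<^sub>R v"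
      unfolding mv True scaleR_scaleR scaleR_left_diff_distrib[symmetric]
      by (rule arg_cong[where f="\<lambda>c. c *\<^sub>R v"]) simp
    ultimately have "norm (?m - ?v) \<le> 2 * (1 - t) * K2" using t
      by (simp add: mult_left_mono)
    also have "\<dots> < K2 * (1 - ?r)" using True K1p t by (simp add: algebra_simps)
    finally show ?thesis .
  next
    case False
    then have "\<rho>0 = 1" using r0 by simp
    then show ?thesis using mv K1p t by simp
  qed
  have Qr: "Qz (?r, ?v, ?m, ?s, p) < e ?r"
  proof -
    obtain x where x: "x \<noteq> 0"
      and hx: "Gf ?r (x \<bullet> ?v) (x \<bullet> ?m) - x \<bullet> (?s *v x) = Qz (?r, ?v, ?m, ?s, p) * (x \<bullet> x)"
      using Q_props(2)[OF stf_sym[OF ss]] by blast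
    have xx: "x \<bullet> x > 0" using x by simp
    define a where "a = (1 - t) * (x \<bullet> v)"
    have i1: "x \<bullet> ?v = a" by (simp add: a_def)
    have i2: "x \<bullet> ?m = \<rho>0 * a" by (simp add: a_def mv)
    have i3: "x \<bullet> (?s *v x) = (1 - t) * (x \<bullet> (\<sigma> *v x))" by (simp add: smv)
    have A0: "(x \<bullet> v)^2 \<ge> 0" by simp
    have "2 * a^2 / (2 - t) \<le> (1 - t) * (x \<bullet> v)^2"
    proof -
      have "(1 - t) * (x \<bullet> v)^2 * (2 - t) - 2 * a^2 = (1 - t) * (x \<bullet> v)^2 * t"
        by (simp add: a_def power2_eq_square algebra_simps)
      moreover have "(1 - t) * (x \<bullet> v)^2 * t \<ge> 0" using t A0 by simp
      ultimately have "2 * a^2 \<le> (1 - t) * (x \<bullet> v)^2 * (2 - t)" by linarith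
      then show ?thesis using t by (simp add: pos_divide_le_eq)
    qed
    then have "Qz (?r, ?v, ?m, ?s, p) * (x \<bullet> x) \<le> (1 - t) * ((x \<bullet> v)^2 - x \<bullet> (\<sigma> *v x))"
      unfolding hx[symmetric] i1 i2 i3 Gf_K[OF r0 t] by (simp add: algebra_simps)
    also have "\<dots> \<le> (1 - t) * (e \<rho>0 * (x \<bullet> x))"
      using h t by (intro mult_left_mono) auto
    also have "\<dots> < e ?r * (x \<bullet> x)"
    proof -
      have "e ?r = (1 - t) * e \<rho>0 + t * \<beta>" unfolding aff by (simp add: algebra_simps)
      then have "e ?r * (x \<bullet> x) = ((1 - t) * e \<rho>0 + t * \<beta>) * (x \<bullet> x)" by simp
      also have "\<dots> = (1 - t) * (e \<rho>0 * (x \<bullet> x)) + t * \<beta> * (x \<bullet> x)"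
        by (simp add: algebra_simps)
      finally have "e ?r * (x \<bullet> x) = (1 - t) * (e \<rho>0 * (x \<bullet> x)) + t * \<beta> * (x \<bullet> x)" .
      moreover have "t * \<beta> * (x \<bullet> x) > 0" using t b0 xx by simp
      ultimately show ?thesis by linarith
    qed
    finally show ?thesis using xx by simp
  qed
  show ?thesis unfolding memU
    using ss rr Qr Tplus_iff(2)[OF rr(1) ep(1), where v="?v" and m="?m" and \<sigma>="?s" and p=p]
      Tminus_iff(2)[OF rr(2) ep(2), where v="?v" and m="?m" and \<sigma>="?s" and p=p] Tp Tm
    by (simp add: K1_def K2_def)
qed

lemma z0_in_U:
  fixes e :: "real \<Rightarrow> real"
  assumes aff: "\<And>r. e r = \<alpha> * r + \<beta>" and ep: "e 1 > 0" "e (-1) > 0"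
  shows "((0, 0, 0, 0, p) :: 'n::finite zpt) \<in> Uset e"
proof -
  have b0: "\<beta> > 0" using ep aff[of 1] aff[of "-1"] by simp
  have s0: "sym_tracefree (0 :: real^'n^'n)" by (simp add: sym_tracefree_def transpose_def vec_eq_iff)
  have "Qz ((0, 0, 0, 0, p) :: 'n zpt) \<le> 0"
    using Q_props(3)[OF stf_sym[OF s0], of 0 0 0 p 0] by (simp add: Gf_def)
  then have "Qz ((0, 0, 0, 0, p) :: 'n zpt) < e 0" using b0 aff[of 0] by simp
  then show ?thesis unfolding memU using s0 ep by (simp add: Tplus_def Tminus_def)
qed

lemma U0_sub_closure:
  fixes e :: "real \<Rightarrow> real"
  assumes aff: "\<And>r. e r = \<alpha> * r + \<beta>" and ep: "e 1 > 0" "e (-1) > 0"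
  shows "(U0bar e :: 'n::finite zpt set) \<subseteq> closure (Uset e)"
proof
  fix z :: "'n zpt" assume z: "z \<in> U0bar e"
  obtain \<rho> v m \<sigma> p where ez: "z = (\<rho>, v, m, \<sigma>, p)" by (cases z) auto
  define \<gamma> :: "real \<Rightarrow> 'n zpt" where "\<gamma> s = ((1 - s) * \<rho> + (1 - (1 - s)) * 0, (1 - s) *\<^sub>R v + (1 - (1 - s)) *\<^sub>R 0,
     (1 - s) *\<^sub>R m + (1 - (1 - s)) *\<^sub>R 0, (1 - s) *\<^sub>R \<sigma> + (1 - (1 - s)) *\<^sub>R 0,
     (1 - s) * p + (1 - (1 - s)) * p)" for s
  have "(\<gamma> \<longlongrightarrow> \<gamma> 0) (at_right 0)"
    unfolding \<gamma>_def by (intro tendsto_intros)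
  moreover have "\<gamma> 0 = z" by (simp add: \<gamma>_def ez)
  ultimately have lim: "(\<gamma> \<longlongrightarrow> z) (at_right 0)" by simp
  show "z \<in> closure (Uset e)"
  proof (rule closure_path[OF lim])
    fix s :: real assume s: "0 < s" "s < 1"
    show "\<gamma> s \<in> Uset e" unfolding \<gamma>_def
      by (rule mix[OF aff ep z[unfolded ez] z0_in_U[OF aff ep]]) (use s in auto)
  qed
qed

lemma kprime_closure:
  fixes e :: "real \<Rightarrow> real" and v :: "real^'n::finite"
  assumes aff: "\<And>r. e r = \<alpha> * r + \<beta>" and ep: "e 1 > 0" "e (-1) > 0"
    and r0: "\<rho>0 = 1 \<or> \<rho>0 = -1" and mv: "m = \<rho>0 *\<^sub>R v" and s: "sym_tracefree \<sigma>"
    and lm: "lambda_max (outer v v - \<sigma>) \<le> e \<rho>0"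
  shows "((\<rho>0, v, m, \<sigma>, p) :: 'n zpt) \<in> closure (Uset e)"
proof -
  have tr: "transpose (outer v v - \<sigma>) = outer v v - \<sigma>"
    using stf_sym[OF s] by (simp add: transpose_lin transpose_outer)
  have h: "\<forall>x. (x \<bullet> v)^2 - x \<bullet> (\<sigma> *v x) \<le> e \<rho>0 * (x \<bullet> x)"
  proof
    fix x
    have "x \<bullet> ((outer v v - \<sigma>) *v x) \<le> e \<rho>0 * (x \<bullet> x)" using lmax_le_iff[OF tr] lm by blast
    then show "(x \<bullet> v)^2 - x \<bullet> (\<sigma> *v x) \<le> e \<rho>0 * (x \<bullet> x)"
      by (simp add: matrix_vector_mult_diff_rdistrib inner_diff_right qf_outer power2_eq_square)
  qed
  define \<gamma> :: "real \<Rightarrow> 'n zpt" where "\<gamma> t = ((1 - t) * \<rho>0, (1 - t) *\<^sub>R v, (1 - t) *\<^sub>R m, (1 - t) *\<^sub>R \<sigma>, p)" for t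
  have "(\<gamma> \<longlongrightarrow> \<gamma> 0) (at_right 0)"
    unfolding \<gamma>_def by (intro tendsto_intros)
  moreover have "\<gamma> 0 = (\<rho>0, v, m, \<sigma>, p)" by (simp add: \<gamma>_def)
  ultimately have lim: "(\<gamma> \<longlongrightarrow> (\<rho>0, v, m, \<sigma>, p)) (at_right 0)" by simp
  show ?thesis
  proof (rule closure_path[OF lim])
    fix t :: real assume t: "0 < t" "t < 1"
    show "\<gamma> t \<in> Uset e" unfolding \<gamma>_def by (rule kpath[OF aff ep r0 mv s h t])
  qed
qed

definition rh :: "'n::finite zpt \<Rightarrow> real" where "rh z = fst z"
definition vv :: "'n::finite zpt \<Rightarrow> real^'n" where "vv z = fst (snd z)"
definition mm :: "'n::finite zpt \<Rightarrow> real^'n" where "mm z = fst (snd (snd z))"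
definition sg :: "'n::finite zpt \<Rightarrow> real^'n^'n" where "sg z = fst (snd (snd (snd z)))"

lemma proj_simps [simp]:
  "rh (\<rho>, v, m, \<sigma>, p) = \<rho>" "vv (\<rho>, v, m, \<sigma>, p) = v" "mm (\<rho>, v, m, \<sigma>, p) = m" "sg (\<rho>, v, m, \<sigma>, p) = \<sigma>"
  by (simp_all add: rh_def vv_def mm_def sg_def)

lemma proj_cont [continuous_intros]:
  "continuous_on S f \<Longrightarrow> continuous_on S (\<lambda>z. rh (f z))"
  "continuous_on S f \<Longrightarrow> continuous_on S (\<lambda>z. vv (f z))"
  "continuous_on S f \<Longrightarrow> continuous_on S (\<lambda>z. mm (f z))"
  "continuous_on S f \<Longrightarrow> continuous_on S (\<lambda>z. sg (f z))"
  unfolding rh_def vv_def mm_def sg_def by (intro continuous_intros; assumption)+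

lemma qf_cont [continuous_intros]:
  fixes f :: "'a::topological_space \<Rightarrow> real^'n::finite^'n"
  assumes "continuous_on S f"
  shows "continuous_on S (\<lambda>z. x \<bullet> (f z *v x))"
proof -
  have "(\<lambda>z. x \<bullet> (f z *v x)) = (\<lambda>z. \<Sum>i\<in>UNIV. x $ i * (\<Sum>j\<in>UNIV. f z $ i $ j * x $ j))"
    by (simp add: inner_vec_def matrix_vector_mult_def)
  moreover have "continuous_on S (\<lambda>z. \<Sum>i\<in>UNIV. x $ i * (\<Sum>j\<in>UNIV. f z $ i $ j * x $ j))"
    using assms by (intro continuous_intros)
  ultimately show ?thesis by metis
qed

lemma closed_stf: "closed {z :: 'n::finite zpt. sym_tracefree (sg z)}"
proof -
  have "{z :: 'n zpt. sym_tracefree (sg z)} =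
      {z. (\<forall>i. \<forall>j. sg z $ i $ j = sg z $ j $ i) \<and> (\<Sum>i\<in>UNIV. sg z $ i $ i) = 0}"
    by (auto simp: sym_tracefree_def transpose_def vec_eq_iff)
  moreover have "closed {z :: 'n zpt. (\<forall>i. \<forall>j. sg z $ i $ j = sg z $ j $ i) \<and> (\<Sum>i\<in>UNIV. sg z $ i $ i) = 0}"
    by (intro closed_Collect_conj closed_Collect_all closed_Collect_eq continuous_intros)
  ultimately show ?thesis by simp
qed

definition Cset :: "(real \<Rightarrow> real) \<Rightarrow> 'n::finite zpt set" where
  "Cset e = {z. sym_tracefree (sg z) \<and> -1 \<le> rh z \<and> rh z \<le> 1 \<and>
     norm (mm z + vv z) \<le> sqrt (real CARD('n) * e 1) * (rh z + 1) \<and>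
     norm (mm z - vv z) \<le> sqrt (real CARD('n) * e (-1)) * (1 - rh z) \<and>
     (\<forall>x. (x \<bullet> vv z)^2 - 2 * rh z * ((x \<bullet> mm z) * (x \<bullet> vv z)) + (x \<bullet> mm z)^2
          - (1 - (rh z)^2) * (x \<bullet> (sg z *v x)) \<le> (1 - (rh z)^2) * e (rh z) * (x \<bullet> x)) \<and>
     (\<forall>x. (x \<bullet> mm z)^2 - x \<bullet> (sg z *v x) \<le> e (rh z) * (x \<bullet> x))}"

lemma closed_C:
  fixes e :: "real \<Rightarrow> real"
  assumes aff: "\<And>r. e r = \<alpha> * r + \<beta>"
  shows "closed (Cset e :: 'n::finite zpt set)"
proof -
  have ee: "e = (\<lambda>r. \<alpha> * r + \<beta>)" using aff by (intro ext) simp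
  show ?thesis unfolding Cset_def ee
    apply (rule closed_Collect_conj, rule closed_stf)
    apply (rule closed_Collect_conj, rule closed_Collect_le, intro continuous_intros, intro continuous_intros)
    apply (rule closed_Collect_conj, rule closed_Collect_le, intro continuous_intros, intro continuous_intros)
    apply (rule closed_Collect_conj, rule closed_Collect_le, intro continuous_intros, intro continuous_intros)
    apply (rule closed_Collect_conj, rule closed_Collect_le, intro continuous_intros, intro continuous_intros)
    apply (rule closed_Collect_conj)
     apply (rule closed_Collect_all, rule closed_Collect_le, intro continuous_intros, intro continuous_intros)
    apply (rule closed_Collect_all, rule closed_Collect_le, intro continuous_intros, intro continuous_intros)
    done
qed

lemma Gf_mul:
  assumes "-1 < \<rho>" "\<rho> < 1"
  shows "(1 - \<rho>^2) * Gf \<rho> a b = a^2 - 2 * \<rho> * (b * a) + b^2"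
proof -
  have "1 - \<rho>^2 > 0" using assms by (simp add: abs_less_iff power2_less_1_iff)
  then show ?thesis by (simp add: Gf_def)
qed

lemma U_sub_C:
  fixes e :: "real \<Rightarrow> real"
  assumes ep: "e 1 > 0" "e (-1) > 0"
  shows "(Uset e :: 'n::finite zpt set) \<subseteq> Cset e"
proof
  fix z :: "'n zpt" assume z: "z \<in> Uset e"
  obtain \<rho> v m \<sigma> p where ez: "z = (\<rho>, v, m, \<sigma>, p)" by (cases z) auto
  from z[unfolded ez] have s: "sym_tracefree \<sigma>" and r: "-1 < \<rho>" "\<rho> < 1"
    and T: "Tplus (\<rho>, v, m, \<sigma>, p) < e 1" "Tminus (\<rho>, v, m, \<sigma>, p) < e (-1)"
    and Q: "Qz (\<rho>, v, m, \<sigma>, p) < e \<rho>"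
    by (simp_all add: memU)
  have N: "norm (m + v) \<le> sqrt (real CARD('n) * e 1) * (\<rho> + 1)"
     "norm (m - v) \<le> sqrt (real CARD('n) * e (-1)) * (1 - \<rho>)"
    using T Tplus_iff(2)[OF r(1) ep(1), where v=v and m=m and \<sigma>=\<sigma> and p=p]
      Tminus_iff(2)[OF r(2) ep(2), where v=v and m=m and \<sigma>=\<sigma> and p=p] by simp_all
  have p: "1 - \<rho>^2 > 0" using r by (simp add: abs_less_iff power2_less_1_iff)
  have G: "Gf \<rho> (x \<bullet> v) (x \<bullet> m) - x \<bullet> (\<sigma> *v x) \<le> e \<rho> * (x \<bullet> x)" for x
  proof -
    have "Gf \<rho> (x \<bullet> v) (x \<bullet> m) - x \<bullet> (\<sigma> *v x) \<le> Qz (\<rho>, v, m, \<sigma>, p) * (x \<bullet> x)"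
      using Q_props(1)[OF stf_sym[OF s]] by blast
    also have "\<dots> \<le> e \<rho> * (x \<bullet> x)" using Q by (intro mult_right_mono) auto
    finally show ?thesis .
  qed
  have C1: "(x \<bullet> v)^2 - 2 * \<rho> * ((x \<bullet> m) * (x \<bullet> v)) + (x \<bullet> m)^2 - (1 - \<rho>^2) * (x \<bullet> (\<sigma> *v x))
      \<le> (1 - \<rho>^2) * e \<rho> * (x \<bullet> x)" for x
  proof -
    have "(1 - \<rho>^2) * (Gf \<rho> (x \<bullet> v) (x \<bullet> m) - x \<bullet> (\<sigma> *v x)) \<le> (1 - \<rho>^2) * (e \<rho> * (x \<bullet> x))"
      using G p by (intro mult_left_mono) auto
    moreover have "(1 - \<rho>^2) * (Gf \<rho> (x \<bullet> v) (x \<bullet> m) - x \<bullet> (\<sigma> *v x)) = (x \<bullet> v)^2 - 2 * \<rho> * ((x \<bullet> m) * (x \<bullet> v)) + (x \<bullet> m)^2 - (1 - \<rho>^2) * (x \<bullet> (\<sigma> *v x))"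
      using Gf_mul[OF r, of "x \<bullet> v" "x \<bullet> m"] by (simp add: right_diff_distrib)
    moreover have "(1 - \<rho>^2) * e \<rho> * (x \<bullet> x) = (1 - \<rho>^2) * (e \<rho> * (x \<bullet> x))" by (simp add: mult.assoc)
    ultimately show ?thesis by linarith
  qed
  have C2: "(x \<bullet> m)^2 - x \<bullet> (\<sigma> *v x) \<le> e \<rho> * (x \<bullet> x)" for x
    using G[of x] Gf_ge[OF r, of "x \<bullet> m" "x \<bullet> v"] by simp
  show "z \<in> Cset e" unfolding ez Cset_def using s r N C1 C2 by simp
qed

lemma C_sub:
  fixes e :: "real \<Rightarrow> real"
  assumes ep: "e 1 > 0" "e (-1) > 0"
  shows "(Cset e :: 'n::finite zpt set) \<subseteq> Kminus' e \<union> U0bar e \<union> Kplus' e"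
proof
  fix z :: "'n zpt" assume z: "z \<in> Cset e"
  obtain \<rho> v m \<sigma> p where ez: "z = (\<rho>, v, m, \<sigma>, p)" by (cases z) auto
  from z[unfolded ez Cset_def] have s: "sym_tracefree \<sigma>" and r: "-1 \<le> \<rho>" "\<rho> \<le> 1"
    and N: "norm (m + v) \<le> sqrt (real CARD('n) * e 1) * (\<rho> + 1)"
      "norm (m - v) \<le> sqrt (real CARD('n) * e (-1)) * (1 - \<rho>)"
    and C1: "\<And>x. (x \<bullet> v)^2 - 2 * \<rho> * ((x \<bullet> m) * (x \<bullet> v)) + (x \<bullet> m)^2 - (1 - \<rho>^2) * (x \<bullet> (\<sigma> *v x))
      \<le> (1 - \<rho>^2) * e \<rho> * (x \<bullet> x)"
    and C2: "\<And>x. (x \<bullet> m)^2 - x \<bullet> (\<sigma> *v x) \<le> e \<rho> * (x \<bullet> x)"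
    by auto
  have tr: "transpose (outer v v - \<sigma>) = outer v v - \<sigma>"
    using stf_sym[OF s] by (simp add: transpose_lin transpose_outer)
  have qo: "x \<bullet> ((outer v v - \<sigma>) *v x) = (x \<bullet> v)^2 - x \<bullet> (\<sigma> *v x)" for x
    by (simp add: matrix_vector_mult_diff_rdistrib inner_diff_right qf_outer power2_eq_square)
  consider "\<rho> = 1" | "\<rho> = -1" | "-1 < \<rho> \<and> \<rho> < 1" using r by linarith
  then show "z \<in> Kminus' e \<union> U0bar e \<union> Kplus' e"
  proof cases
    case 1
    then have "m = v" using N(2) by simp
    then have "lambda_max (outer v v - \<sigma>) \<le> e 1"
      unfolding lmax_le_iff[OF tr] qo using C2 1 by simp
    then have "z \<in> Kplus' e" unfolding ez Kplus'_def Zset_def using s 1 \<open>m = v\<close> by simp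
    then show ?thesis by simp
  next
    case 2
    then have "m = - v" using N(1) by (simp add: add_eq_0_iff)
    then have "lambda_max (outer v v - \<sigma>) \<le> e (-1)"
      unfolding lmax_le_iff[OF tr] qo using C2 2 by simp
    then have "z \<in> Kminus' e" unfolding ez Kminus'_def Zset_def using s 2 \<open>m = - v\<close> by simp
    then show ?thesis by simp
  next
    case 3
    then have r': "-1 < \<rho>" "\<rho> < 1" by auto
    have p: "1 - \<rho>^2 > 0" using r' by (simp add: abs_less_iff power2_less_1_iff)
    have "Gf \<rho> (x \<bullet> v) (x \<bullet> m) - x \<bullet> (\<sigma> *v x) \<le> e \<rho> * (x \<bullet> x)" for x
    proof -
      have "(1 - \<rho>^2) * (Gf \<rho> (x \<bullet> v) (x \<bullet> m) - x \<bullet> (\<sigma> *v x)) = (x \<bullet> v)^2 - 2 * \<rho> * ((x \<bullet> m) * (x \<bullet> v)) + (x \<bullet> m)^2 - (1 - \<rho>^2) * (x \<bullet> (\<sigma> *v x))"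
        using Gf_mul[OF r', of "x \<bullet> v" "x \<bullet> m"] by (simp add: right_diff_distrib)
      moreover have "(1 - \<rho>^2) * e \<rho> * (x \<bullet> x) = (1 - \<rho>^2) * (e \<rho> * (x \<bullet> x))" by (simp add: mult.assoc)
      ultimately have "(1 - \<rho>^2) * (Gf \<rho> (x \<bullet> v) (x \<bullet> m) - x \<bullet> (\<sigma> *v x)) \<le> (1 - \<rho>^2) * (e \<rho> * (x \<bullet> x))"
        using C1[of x] by linarith
      then show ?thesis using p by simp
    qed
    then have Q: "Qz (\<rho>, v, m, \<sigma>, p) \<le> e \<rho>" using Q_props(3)[OF stf_sym[OF s]] by blast
    have "z \<in> U0bar e" unfolding ez memU0
      using s r' Q N Tplus_iff(1)[OF r'(1) ep(1), where v=v and m=m and \<sigma>=\<sigma> and p=p]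
      Tminus_iff(1)[OF r'(2) ep(2), where v=v and m=m and \<sigma>=\<sigma> and p=p] by simp
    then show ?thesis by simp
  qed
qed

theorem lemma3p8:
  fixes e :: "real \<Rightarrow> real"
  assumes "CARD('n::finite) \<ge> 2"
    and "\<exists>a b. \<forall>r. e r = a * r + b"
    and "e 1 > 0" and "e (-1) > 0"
  shows "convex (Uset e :: 'n zpt set)
    \<and> closure (Uset e :: 'n zpt set) = Kminus' e \<union> U0bar e \<union> Kplus' e
    \<and> (Kset e :: 'n zpt set) \<subseteq> closure (Uset e)"
proof -
  obtain \<alpha> \<beta> where aff0: "\<forall>r. e r = \<alpha> * r + \<beta>" using assms(2) by blast
  have aff: "\<And>r. e r = \<alpha> * r + \<beta>" using aff0 by blast
  have ep: "e 1 > 0" "e (-1) > 0" using assms(3,4) by auto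
  have cv: "convex (Uset e :: 'n zpt set)" by (rule convexU[OF aff ep])
  have sub1: "closure (Uset e :: 'n zpt set) \<subseteq> Kminus' e \<union> U0bar e \<union> Kplus' e"
    using closure_minimal[OF U_sub_C[OF ep] closed_C[OF aff]] C_sub[OF ep] by blast
  have kp: "Kplus' e \<subseteq> closure (Uset e :: 'n zpt set)"
  proof
    fix z :: "'n zpt" assume z: "z \<in> Kplus' e"
    obtain \<rho> v m \<sigma> p where ez: "z = (\<rho>, v, m, \<sigma>, p)" by (cases z) auto
    from z[unfolded ez Kplus'_def Zset_def] have "sym_tracefree \<sigma>" "\<rho> = 1" "m = v"
      "lambda_max (outer v v - \<sigma>) \<le> e 1" by auto
    then show "z \<in> closure (Uset e)" unfolding ez
      by (intro kprime_closure[OF aff ep]) auto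
  qed
  have km: "Kminus' e \<subseteq> closure (Uset e :: 'n zpt set)"
  proof
    fix z :: "'n zpt" assume z: "z \<in> Kminus' e"
    obtain \<rho> v m \<sigma> p where ez: "z = (\<rho>, v, m, \<sigma>, p)" by (cases z) auto
    from z[unfolded ez Kminus'_def Zset_def] have "sym_tracefree \<sigma>" "\<rho> = -1" "m = - v"
      "lambda_max (outer v v - \<sigma>) \<le> e (-1)" by auto
    then show "z \<in> closure (Uset e)" unfolding ez
      by (intro kprime_closure[OF aff ep]) auto
  qed
  have sub2: "Kminus' e \<union> U0bar e \<union> Kplus' e \<subseteq> closure (Uset e :: 'n zpt set)"
    using kp km U0_sub_closure[OF aff ep] by blast
  have ks: "(Kset e :: 'n zpt set) \<subseteq> closure (Uset e)"
  proof
    fix z :: "'n zpt" assume z: "z \<in> Kset e"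
    obtain \<rho> v m \<sigma> p where ez: "z = (\<rho>, v, m, \<sigma>, p)" by (cases z) auto
    from z[unfolded ez Kset_def Zset_def] have s: "sym_tracefree \<sigma>" and r: "\<rho> = 1 \<or> \<rho> = -1"
      and mv: "m = \<rho> *\<^sub>R v" and ov: "outer v v - \<sigma> = e \<rho> *\<^sub>R mat 1" by auto
    have tr: "transpose (e \<rho> *\<^sub>R mat 1 :: real^'n^'n) = e \<rho> *\<^sub>R mat 1"
      by (simp add: transpose_lin)
    have "lambda_max (e \<rho> *\<^sub>R mat 1 :: real^'n^'n) \<le> e \<rho>"
      unfolding lmax_le_iff[OF tr] by (simp add: smv)
    then have "lambda_max (outer v v - \<sigma>) \<le> e \<rho>" using ov by simp
    then show "z \<in> closure (Uset e)" unfolding ez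
      by (rule kprime_closure[OF aff ep r mv s])
  qed
  show ?thesis using cv sub1 sub2 ks by blast
qed


end
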